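(* Let $p(x,y)$ be a real polynomial with $p(0,0)=0$, $\nabla p(0,0)=(0,0)$, $\dim\operatorname{Co}N_p=2$, such that for every $A\in\mathbb{N}^2$ the main $A$-quasi-homogeneous form of $p$ is nonnegative on $\mathbb{R}^2$. Let $A=(A_1,A_2)\in\mathcal{A}_p$. Write $\varphi_1^A=\sum_{i=1}^s a_ix^{\alpha_i}y^{\beta_i}$ with $a_i\neq0$, $\alpha_1>\dots>\alpha_s\ge0$, and $\varphi_2^A=\sum_{i=1}^v b_ix^{\chi_i}y^{\eta_i}$ with $b_i\neq0$, $\chi_1>\dots>\chi_v\ge0$. Then condition $(C1)_A$ holds (there is $(x_0,y_0)$ with $\varphi_1^A(x_0,y_0)=0$ and $\varphi_2^A(x_0,y_0)<0$) if and only if at least one of the following holds: (a) $\alpha_s>0$, $\chi_v=0$, and ($b_v<0$ or $\eta_v$ is not a positive even integer); (b) $\beta_1>0$, $\eta_1=0$, and ($b_1<0$ or $\chi_1$ is not a positive even integer); (c) there exists $u_0\in U_p(A)$ such that the system $x\neq0$, $y\neq0$, $x^{-A_2}y^{A_1}=u_0$, $x^{\chi_1}y^{\eta_1}g_2^A(u_0)<0$ has a real solution $(x,y)$.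
   Context: $\mathbb{N}=\{1,2,\dots\}$; $\mathbb{N}_0^2$ is the set of $(A_1,A_2)\in\mathbb{N}^2$ with $\gcd(A_1,A_2)=1$. $N_p$ is the support of $p$ (exponent vectors of terms with nonzero coefficients) and $\operatorname{Co}N_p$ its convex hull. For $A\in\mathbb{N}^2$ the main $A$-quasi-homogeneous form of $p$ is the sum of the terms of $p$ whose exponent vectors $k$ minimize $\langle A,k\rangle$ over $N_p$. For $A\in\mathbb{N}_0^2$, with $B_1^A<B_2^A<\dots$ the distinct values of $\langle A,k\rangle$, $k\in N_p$, $\varphi_i^A$ is the sum of the terms of $p$ with $\langle A,k\rangle=B_i^A$ (so $\varphi_1^A$ is the main form, and $\varphi_2^A\not\equiv0$ here). The characteristic polynomial of a form $\sum_i c_ix^{\gamma_i}y^{\delta_i}$ ($c_i\neq0$, $\gamma_1>\gamma_2>\dots$) from this decomposition is $\sum_i c_iu^{(\gamma_1-\gamma_i)/A_2}$; $g_1^A,g_2^A$ are those of $\varphi_1^A,\varphi_2^A$. $\mathcal{A}_p$ is the set of $A\in\mathbb{N}_0^2$ such that $\varphi_1^A$ has at least three terms, $g_1^A\ge0$ on $\mathbb{R}$, and $g_1^A$ has a real root; $U_p(A)$ is the set of real roots of $g_1^A$. *)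

theory Defs
  imports "HOL-Analysis.Analysis"
begin

text \<open>A real bivariate polynomial p(x,y) is represented by its coefficient function
  c :: nat \<times> nat \<Rightarrow> real (c (i,j) = coefficient of x^i y^j), with finite support.\<close>

type_synonym bipoly = "nat \<times> nat \<Rightarrow> real"

definition is_bipoly :: "bipoly \<Rightarrow> bool" where
  "is_bipoly c \<longleftrightarrow> finite {k. c k \<noteq> 0}"

definition Npoly :: "bipoly \<Rightarrow> (nat \<times> nat) set" where
  "Npoly c = {k. c k \<noteq> 0}"

definition peval :: "bipoly \<Rightarrow> real \<Rightarrow> real \<Rightarrow> real" where
  "peval c x y = (\<Sum>k\<in>Npoly c. c k * x ^ fst k * y ^ snd k)"

definition CoN :: "bipoly \<Rightarrow> (real \<times> real) set" where
  "CoN c = convex hull ((\<lambda>k. (real (fst k), real (snd k))) ` Npoly c)"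

definition ip :: "nat \<times> nat \<Rightarrow> nat \<times> nat \<Rightarrow> nat" where
  "ip A k = fst A * fst k + snd A * snd k"

definition level_form :: "bipoly \<Rightarrow> nat \<times> nat \<Rightarrow> nat \<Rightarrow> bipoly" where
  "level_form c A B = (\<lambda>k. if ip A k = B then c k else 0)"

definition main_form :: "bipoly \<Rightarrow> nat \<times> nat \<Rightarrow> bipoly" where
  "main_form c A = level_form c A (Min (ip A ` Npoly c))"

definition Npos2 :: "(nat \<times> nat) set" where
  "Npos2 = {A. fst A \<ge> 1 \<and> snd A \<ge> 1}"

definition N0_2 :: "(nat \<times> nat) set" where
  "N0_2 = {A. A \<in> Npos2 \<and> coprime (fst A) (snd A)}"

text \<open>B_1^A < B_2^A < ... : the distinct values of <A,k>, k in N_p, in increasing order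
  (0-indexed list), and phi_i^A (1-indexed).\<close>
definition levels :: "bipoly \<Rightarrow> nat \<times> nat \<Rightarrow> nat list" where
  "levels c A = sorted_list_of_set (ip A ` Npoly c)"

definition phi :: "bipoly \<Rightarrow> nat \<times> nat \<Rightarrow> nat \<Rightarrow> bipoly" where
  "phi c A i = level_form c A (levels c A ! (i - 1))"

definition xmax :: "bipoly \<Rightarrow> nat" where
  "xmax f = Max (fst ` Npoly f)"

definition xmin :: "bipoly \<Rightarrow> nat" where
  "xmin f = Min (fst ` Npoly f)"

definition first_term :: "bipoly \<Rightarrow> nat \<times> nat" where
  "first_term f = (THE k. k \<in> Npoly f \<and> fst k = xmax f)"

definition last_term :: "bipoly \<Rightarrow> nat \<times> nat" where
  "last_term f = (THE k. k \<in> Npoly f \<and> fst k = xmin f)"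

definition charpoly :: "bipoly \<Rightarrow> nat \<times> nat \<Rightarrow> real \<Rightarrow> real" where
  "charpoly f A u = (\<Sum>k\<in>Npoly f. f k * u ^ ((xmax f - fst k) div snd A))"

definition g :: "bipoly \<Rightarrow> nat \<times> nat \<Rightarrow> nat \<Rightarrow> real \<Rightarrow> real" where
  "g c A i = charpoly (phi c A i) A"

definition Aset :: "bipoly \<Rightarrow> (nat \<times> nat) set" where
  "Aset c = {A \<in> N0_2. card (Npoly (phi c A 1)) \<ge> 3
              \<and> (\<forall>u. g c A 1 u \<ge> 0) \<and> (\<exists>u. g c A 1 u = 0)}"

definition Uset :: "bipoly \<Rightarrow> nat \<times> nat \<Rightarrow> real set" where
  "Uset c A = {u. g c A 1 u = 0}"

definition C1 :: "bipoly \<Rightarrow> nat \<times> nat \<Rightarrow> bool" where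
  "C1 c A \<longleftrightarrow> (\<exists>x0 y0. peval (phi c A 1) x0 y0 = 0 \<and> peval (phi c A 2) x0 y0 < 0)"

end

theory Submission imports Defs begin

lemma Npoly_level: "Npoly (level_form c A B) = {k \<in> Npoly c. ip A k = B}"
  by (auto simp: Npoly_def level_form_def)

lemma lf_uniq_fst:
  assumes "\<forall>k\<in>Npoly f. ip A k = B" "snd A \<ge> 1" "k \<in> Npoly f" "k' \<in> Npoly f" "fst k = fst k'"
  shows "k = k'"
proof -
  have "ip A k = ip A k'" using assms by auto
  then have "snd A * snd k = snd A * snd k'" using assms(5) by (simp add: ip_def)
  then have "snd k = snd k'" using assms(2) by simp
  then show ?thesis using assms(5) by (simp add: prod_eq_iff)
qed

lemma lf_uniq_snd:
  assumes "\<forall>k\<in>Npoly f. ip A k = B" "fst A \<ge> 1" "k \<in> Npoly f" "k' \<in> Npoly f" "snd k = snd k'"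
  shows "k = k'"
proof -
  have "ip A k = ip A k'" using assms by auto
  then have "fst A * fst k = fst A * fst k'" using assms(5) by (simp add: ip_def)
  then have "fst k = fst k'" using assms(2) by simp
  then show ?thesis using assms(5) by (simp add: prod_eq_iff)
qed

lemma first_term_props:
  assumes "finite (Npoly f)" "Npoly f \<noteq> {}" "\<forall>k\<in>Npoly f. ip A k = B" "snd A \<ge> 1"
  shows "first_term f \<in> Npoly f \<and> fst (first_term f) = xmax f"
proof -
  have "xmax f \<in> fst ` Npoly f" unfolding xmax_def using assms by (intro Max_in) auto
  then obtain k where k: "k \<in> Npoly f" "fst k = xmax f" by auto
  have "first_term f = k" unfolding first_term_def
    by (rule the_equality) (use k lf_uniq_fst[OF assms(3,4)] in auto)
  then show ?thesis using k by simp
qed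

lemma last_term_props:
  assumes "finite (Npoly f)" "Npoly f \<noteq> {}" "\<forall>k\<in>Npoly f. ip A k = B" "snd A \<ge> 1"
  shows "last_term f \<in> Npoly f \<and> fst (last_term f) = xmin f"
proof -
  have "xmin f \<in> fst ` Npoly f" unfolding xmin_def using assms by (intro Min_in) auto
  then obtain k where k: "k \<in> Npoly f" "fst k = xmin f" by auto
  have "last_term f = k" unfolding last_term_def
    by (rule the_equality) (use k lf_uniq_fst[OF assms(3,4)] in auto)
  then show ?thesis using k by simp
qed

lemma sum_single:
  assumes "finite S" "k \<in> S" "\<forall>j\<in>S. j \<noteq> k \<longrightarrow> h j = (0::real)"
  shows "sum h S = h k"
proof -
  have "sum h S = h k + sum h (S - {k})" using assms by (simp add: sum.remove)
  also have "sum h (S - {k}) = 0" using assms by (intro sum.neutral) auto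
  finally show ?thesis by simp
qed

lemma peval_x0:
  assumes "finite (Npoly f)" "Npoly f \<noteq> {}" "\<forall>k\<in>Npoly f. ip A k = B" "snd A \<ge> 1"
  shows "peval f 0 y = (if xmin f = 0 then f (last_term f) * y ^ snd (last_term f) else 0)"
proof -
  note L = last_term_props[OF assms]
  have mn: "xmin f \<le> fst k" if "k \<in> Npoly f" for k
    unfolding xmin_def using assms(1) that by (intro Min_le) auto
  show ?thesis
  proof (cases "xmin f = 0")
    case True
    have "peval f 0 y = f (last_term f) * 0 ^ fst (last_term f) * y ^ snd (last_term f)"
      unfolding peval_def
    proof (rule sum_single[OF assms(1) conjunct1[OF L]], intro ballI impI)
      fix j assume j: "j \<in> Npoly f" "j \<noteq> last_term f"
      have "fst j \<noteq> 0"
      proof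
        assume "fst j = 0"
        then have "j = last_term f" using lf_uniq_fst[OF assms(3,4) j(1) conjunct1[OF L]] L True by simp
        then show False using j by simp
      qed
      then show "f j * 0 ^ fst j * y ^ snd j = 0" by simp
    qed
    then show ?thesis using True L by simp
  next
    case False
    have "peval f 0 y = 0" unfolding peval_def
    proof (rule sum.neutral, intro ballI)
      fix j assume "j \<in> Npoly f"
      then have "fst j \<noteq> 0" using mn[of j] False by simp
      then show "f j * 0 ^ fst j * y ^ snd j = 0" by simp
    qed
    then show ?thesis using False by simp
  qed
qed

lemma snd_first_min:
  assumes "finite (Npoly f)" "Npoly f \<noteq> {}" "\<forall>k\<in>Npoly f. ip A k = B" "snd A \<ge> 1" "k \<in> Npoly f"
  shows "snd (first_term f) \<le> snd k"
proof -
  note F = first_term_props[OF assms(1-4)]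
  have "fst k \<le> xmax f" unfolding xmax_def using assms(1,5) by (intro Max_ge) auto
  moreover have "ip A k = ip A (first_term f)" using assms(3,5) F by auto
  ultimately have e1: "fst A * fst k + snd A * snd k = fst A * fst (first_term f) + snd A * snd (first_term f)"
    and e2: "fst k \<le> fst (first_term f)" using F by (auto simp: ip_def)
  have "fst A * fst k \<le> fst A * fst (first_term f)" using e2 by (rule mult_le_mono2)
  then have "snd A * snd (first_term f) \<le> snd A * snd k" using e1 by linarith
  then show ?thesis using assms(4) by simp
qed

lemma peval_y0:
  assumes "finite (Npoly f)" "Npoly f \<noteq> {}" "\<forall>k\<in>Npoly f. ip A k = B" "snd A \<ge> 1" "fst A \<ge> 1"
  shows "peval f x 0 = (if snd (first_term f) = 0 then f (first_term f) * x ^ fst (first_term f) else 0)"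
proof -
  note F = first_term_props[OF assms(1-4)]
  show ?thesis
  proof (cases "snd (first_term f) = 0")
    case True
    have "peval f x 0 = f (first_term f) * x ^ fst (first_term f) * 0 ^ snd (first_term f)"
      unfolding peval_def
    proof (rule sum_single[OF assms(1) conjunct1[OF F]], intro ballI impI)
      fix j assume j: "j \<in> Npoly f" "j \<noteq> first_term f"
      have "snd j \<noteq> 0"
      proof
        assume "snd j = 0"
        then have "j = first_term f" using lf_uniq_snd[OF assms(3,5) j(1) conjunct1[OF F]] True by simp
        then show False using j by simp
      qed
      then show "f j * x ^ fst j * 0 ^ snd j = 0" by simp
    qed
    then show ?thesis using True by simp
  next
    case False
    have "peval f x 0 = 0" unfolding peval_def
    proof (rule sum.neutral, intro ballI)
      fix j assume "j \<in> Npoly f"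
      then have "snd j \<noteq> 0" using snd_first_min[OF assms(1-4), of j] False by simp
      then show "f j * x ^ fst j * 0 ^ snd j = 0" by simp
    qed
    then show ?thesis using False by simp
  qed
qed

lemma exps_rel:
  assumes "finite (Npoly f)" "Npoly f \<noteq> {}" "\<forall>k\<in>Npoly f. ip A k = B" "snd A \<ge> 1"
    "coprime (fst A) (snd A)" "k \<in> Npoly f"
  shows "fst k + snd A * ((xmax f - fst k) div snd A) = fst (first_term f)
       \<and> snd k = snd (first_term f) + fst A * ((xmax f - fst k) div snd A)"
proof -
  note F = first_term_props[OF assms(1-4)]
  define K where "K = first_term f"
  have le: "fst k \<le> fst K" unfolding K_def F[THEN conjunct2] xmax_def using assms(1,6) by (intro Max_ge) auto
  have le2: "snd K \<le> snd k" unfolding K_def by (rule snd_first_min[OF assms(1-4,6)])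
  have "ip A k = ip A K" using assms(3,6) F K_def by auto
  then have eq: "fst A * fst k + snd A * snd k = fst A * fst K + snd A * snd K" by (simp add: ip_def)
  have eq2: "fst A * (fst K - fst k) = snd A * (snd k - snd K)"
    using eq le le2 by (simp add: diff_mult_distrib2)
  then have "snd A dvd fst A * (fst K - fst k)" by simp
  then have dv: "snd A dvd (fst K - fst k)"
    using assms(5) by (metis coprime_commute coprime_dvd_mult_right_iff)
  define m where "m = (fst K - fst k) div snd A"
  have m1: "snd A * m = fst K - fst k" using dv unfolding m_def by simp
  have "snd A * (fst A * m) = snd A * (snd k - snd K)" using eq2 m1
    by (metis mult.left_commute)
  then have m2: "fst A * m = snd k - snd K" using assms(4) by simp
  have "xmax f = fst K" using F K_def by simp
  then show ?thesis using m1 m2 le le2 unfolding m_def K_def by simp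
qed

lemma peval_factor:
  assumes "finite (Npoly f)" "Npoly f \<noteq> {}" "\<forall>k\<in>Npoly f. ip A k = B" "snd A \<ge> 1"
    "coprime (fst A) (snd A)" "(x::real) \<noteq> 0"
  shows "peval f x y = x ^ fst (first_term f) * y ^ snd (first_term f)
            * charpoly f A (inverse (x ^ snd A) * y ^ fst A)"
proof -
  have "peval f x y = (\<Sum>k\<in>Npoly f. x ^ fst (first_term f) * y ^ snd (first_term f) *
      (f k * (inverse (x ^ snd A) * y ^ fst A) ^ ((xmax f - fst k) div snd A)))"
    unfolding peval_def
  proof (rule sum.cong[OF refl])
    fix k assume k: "k \<in> Npoly f"
    define m where "m = (xmax f - fst k) div snd A"
    note E = exps_rel[OF assms(1-5) k, folded m_def]
    have "x ^ fst (first_term f) * y ^ snd (first_term f) * (f k * (inverse (x ^ snd A) * y ^ fst A) ^ m)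
        = f k * (x ^ fst k * x ^ (snd A * m) * inverse (x ^ (snd A * m))) * (y ^ snd (first_term f) * y ^ (fst A * m))"
    proof -
      have p: "(inverse (x ^ snd A) * y ^ fst A) ^ m = inverse (x ^ (snd A * m)) * y ^ (fst A * m)"
        by (simp add: power_mult_distrib power_mult power_inverse)
      have q: "x ^ fst (first_term f) = x ^ fst k * x ^ (snd A * m)"
        using E[THEN conjunct1] by (metis power_add)
      show ?thesis unfolding p q by (simp add: mult_ac)
    qed
    also have "\<dots> = f k * x ^ fst k * y ^ snd k"
      using assms(6) E by (simp add: power_add)
    finally have eq: "x ^ fst (first_term f) * y ^ snd (first_term f) * (f k * (inverse (x ^ snd A) * y ^ fst A) ^ m) = f k * x ^ fst k * y ^ snd k" .
    show "f k * x ^ fst k * y ^ snd k = x ^ fst (first_term f) * y ^ snd (first_term f) *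
      (f k * (inverse (x ^ snd A) * y ^ fst A) ^ ((xmax f - fst k) div snd A))"
      using eq[symmetric] unfolding m_def .
  qed
  then show ?thesis unfolding charpoly_def by (simp add: sum_distrib_left)
qed

lemma two_levels:
  assumes "aff_dim (CoN c) = 2" "finite (Npoly c)" "fst A \<ge> 1"
  shows "card (ip A ` Npoly c) \<ge> 2"
proof (rule ccontr)
  assume "\<not> ?thesis"
  then have "card (ip A ` Npoly c) \<le> 1" by simp
  moreover have fin: "finite (ip A ` Npoly c)" using assms(2) by simp
  ultimately have all: "\<forall>a1\<in>ip A ` Npoly c. \<forall>a2\<in>ip A ` Npoly c. a1 = a2"
    using card_le_Suc0_iff_eq by (metis One_nat_def)
  obtain B where B: "ip A ` Npoly c \<subseteq> {B}"
  proof (cases "ip A ` Npoly c = {}")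
    case True then show ?thesis using that by blast
  next
    case False
    then obtain B where "B \<in> ip A ` Npoly c" by blast
    then have "ip A ` Npoly c \<subseteq> {B}" using all by blast
    then show ?thesis using that by blast
  qed
  define a :: "real \<times> real" where "a = (real (fst A), real (snd A))"
  have a0: "a \<noteq> 0" using assms(3) by (simp add: a_def zero_prod_def)
  have sub: "(\<lambda>k. (real (fst k), real (snd k))) ` Npoly c \<subseteq> {z. a \<bullet> z = real B}"
  proof
    fix z assume "z \<in> (\<lambda>k. (real (fst k), real (snd k))) ` Npoly c"
    then obtain k where k: "k \<in> Npoly c" "z = (real (fst k), real (snd k))" by auto
    have "ip A k = B" using B k by auto
    then have "real (fst A * fst k + snd A * snd k) = real B" by (simp add: ip_def)
    then show "z \<in> {z. a \<bullet> z = real B}" using k by (simp add: a_def inner_Pair)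
  qed
  have "aff_dim (CoN c) = aff_dim ((\<lambda>k. (real (fst k), real (snd k))) ` Npoly c)"
    unfolding CoN_def by (rule aff_dim_convex_hull)
  also have "\<dots> \<le> aff_dim {z. a \<bullet> z = real B}" by (rule aff_dim_subset[OF sub])
  also have "\<dots> = 1" using a0 by simp
  finally show False using assms(1) by simp
qed

theorem mainTheorem6:
  fixes c :: bipoly and A :: "nat \<times> nat"
  assumes poly: "is_bipoly c"
    and zero: "peval c 0 0 = 0"
    and gradx: "((\<lambda>x. peval c x 0) has_real_derivative 0) (at 0)"
    and grady: "((\<lambda>y. peval c 0 y) has_real_derivative 0) (at 0)"
    and dim2: "aff_dim (CoN c) = 2"
    and mainnonneg: "\<forall>B\<in>Npos2. \<forall>x y. peval (main_form c B) x y \<ge> 0"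
    and A: "A \<in> Aset c"
  shows "C1 c A \<longleftrightarrow>
     ((xmin (phi c A 1) > 0 \<and> xmin (phi c A 2) = 0 \<and>
        (phi c A 2 (last_term (phi c A 2)) < 0
         \<or> \<not> (snd (last_term (phi c A 2)) > 0 \<and> even (snd (last_term (phi c A 2))))))
    \<or> (snd (first_term (phi c A 1)) > 0 \<and> snd (first_term (phi c A 2)) = 0 \<and>
        (phi c A 2 (first_term (phi c A 2)) < 0
         \<or> \<not> (fst (first_term (phi c A 2)) > 0 \<and> even (fst (first_term (phi c A 2))))))
    \<or> (\<exists>u0\<in>Uset c A. \<exists>x y::real. x \<noteq> 0 \<and> y \<noteq> 0 \<and>
          inverse (x ^ snd A) * y ^ fst A = u0 \<and>
          x ^ fst (first_term (phi c A 2)) * y ^ snd (first_term (phi c A 2)) * g c A 2 u0 < 0))"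
proof -
  have A1: "fst A \<ge> 1" and A2: "snd A \<ge> 1" and cop: "coprime (fst A) (snd A)"
  proof -
    have "A \<in> N0_2" using A unfolding Aset_def by blast
    then show "fst A \<ge> 1" "snd A \<ge> 1" "coprime (fst A) (snd A)" unfolding N0_2_def Npos2_def by simp_all
  qed
  have finc: "finite (Npoly c)" using poly by (simp add: is_bipoly_def Npoly_def)
  define S where "S = ip A ` Npoly c"
  define L where "L = levels c A"
  have finS: "finite S" using finc S_def by simp
  have cS: "card S \<ge> 2" using two_levels[OF dim2 finc A1] S_def by simp
  have setL: "set L = S" and sL: "sorted_wrt (<) L" and lenL: "length L = card S"
    using finS unfolding L_def levels_def S_def[symmetric] by auto
  have L01: "L ! 0 < L ! 1" using sL lenL cS by (simp add: sorted_wrt_iff_nth_less)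
  have L0S: "L ! 0 \<in> S" and L1S: "L ! 1 \<in> S" using setL lenL cS nth_mem[of 0 L] nth_mem[of 1 L] by auto
  define f1 where "f1 = phi c A 1"
  define f2 where "f2 = phi c A 2"
  have f1d: "f1 = level_form c A (L ! 0)" and f2d: "f2 = level_form c A (L ! 1)"
    unfolding f1_def f2_def phi_def L_def by simp_all
  have N1: "Npoly f1 = {k \<in> Npoly c. ip A k = L ! 0}" and N2: "Npoly f2 = {k \<in> Npoly c. ip A k = L ! 1}"
    unfolding f1d f2d by (rule Npoly_level)+
  have fin1: "finite (Npoly f1)" and fin2: "finite (Npoly f2)" using N1 N2 finc by auto
  have ne1: "Npoly f1 \<noteq> {}"
  proof -
    obtain k where "k \<in> Npoly c" "ip A k = L ! 0" using L0S S_def by auto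
    then show ?thesis using N1 by blast
  qed
  have ne2: "Npoly f2 \<noteq> {}"
  proof -
    obtain k where "k \<in> Npoly c" "ip A k = L ! 1" using L1S S_def by auto
    then show ?thesis using N2 by blast
  qed
  have lv1: "\<forall>k\<in>Npoly f1. ip A k = L ! 0" and lv2: "\<forall>k\<in>Npoly f2. ip A k = L ! 1" using N1 N2 by auto
  have nz2: "(0,0) \<notin> Npoly f2" using lv2 L01 by (auto simp: ip_def)
  note X1 = peval_x0[OF fin1 ne1 lv1 A2] and X2 = peval_x0[OF fin2 ne2 lv2 A2]
  note Y1 = peval_y0[OF fin1 ne1 lv1 A2 A1] and Y2 = peval_y0[OF fin2 ne2 lv2 A2 A1]
  note P1 = peval_factor[OF fin1 ne1 lv1 A2 cop] and P2 = peval_factor[OF fin2 ne2 lv2 A2 cop]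
  note LT1 = last_term_props[OF fin1 ne1 lv1 A2] and LT2 = last_term_props[OF fin2 ne2 lv2 A2]
  note FT1 = first_term_props[OF fin1 ne1 lv1 A2] and FT2 = first_term_props[OF fin2 ne2 lv2 A2]
  have g1: "g c A 1 = charpoly f1 A" and g2: "g c A 2 = charpoly f2 A" unfolding g_def f1_def f2_def by simp_all
  have nzv: "f k \<noteq> 0" if "k \<in> Npoly f" for f k using that by (simp add: Npoly_def)
  show ?thesis unfolding f1_def[symmetric] f2_def[symmetric] g2
  proof
    assume "C1 c A"
    then obtain x0 y0 where h1: "peval f1 x0 y0 = 0" and h2: "peval f2 x0 y0 < 0"
      unfolding C1_def f1_def f2_def by auto
    consider "x0 \<noteq> 0" "y0 \<noteq> 0" | "x0 = 0" | "x0 \<noteq> 0" "y0 = 0" by blast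
    then show "(xmin f1 > 0 \<and> xmin f2 = 0 \<and>
        (f2 (last_term f2) < 0 \<or> \<not> (snd (last_term f2) > 0 \<and> even (snd (last_term f2)))))
      \<or> (snd (first_term f1) > 0 \<and> snd (first_term f2) = 0 \<and>
        (f2 (first_term f2) < 0 \<or> \<not> (fst (first_term f2) > 0 \<and> even (fst (first_term f2)))))
      \<or> (\<exists>u0\<in>Uset c A. \<exists>x y::real. x \<noteq> 0 \<and> y \<noteq> 0 \<and>
          inverse (x ^ snd A) * y ^ fst A = u0 \<and>
          x ^ fst (first_term f2) * y ^ snd (first_term f2) * charpoly f2 A u0 < 0)"
    proof cases
      case 1
      define u0 where "u0 = inverse (x0 ^ snd A) * y0 ^ fst A"
      have "x0 ^ fst (first_term f1) * y0 ^ snd (first_term f1) * charpoly f1 A u0 = 0"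
        using h1 P1[OF 1(1), of y0] u0_def by simp
      then have "charpoly f1 A u0 = 0" using 1 by simp
      then have "u0 \<in> Uset c A" unfolding Uset_def g1 by simp
      moreover have "x0 ^ fst (first_term f2) * y0 ^ snd (first_term f2) * charpoly f2 A u0 < 0"
        using h2 P2[OF 1(1), of y0] u0_def by simp
      ultimately have "\<exists>u\<in>Uset c A. \<exists>x y::real. x \<noteq> 0 \<and> y \<noteq> 0 \<and>
          inverse (x ^ snd A) * y ^ fst A = u \<and>
          x ^ fst (first_term f2) * y ^ snd (first_term f2) * charpoly f2 A u < 0"
        using 1 u0_def by (intro bexI[of _ u0] exI[of _ x0] exI[of _ y0]) auto
      then show ?thesis by (intro disjI2)
    next
      case 2
      have a: "xmin f2 = 0" and b: "f2 (last_term f2) * y0 ^ snd (last_term f2) < 0"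
        using h2 X2[of y0] 2 by (auto split: if_splits)
      have "xmin f1 \<noteq> 0"
      proof
        assume x1: "xmin f1 = 0"
        then have "f1 (last_term f1) * y0 ^ snd (last_term f1) = 0" using h1 X1[of y0] 2 by simp
        moreover have "f1 (last_term f1) \<noteq> 0" using nzv[of "last_term f1" f1] LT1 by simp
        ultimately have "y0 ^ snd (last_term f1) = 0" by simp
        then have "y0 = 0" by simp
        moreover have "snd (last_term f2) \<noteq> 0"
        proof
          assume "snd (last_term f2) = 0"
          then have "last_term f2 = (0,0)" using LT2 a by (simp add: prod_eq_iff)
          then show False using LT2 nz2 by simp
        qed
        ultimately show False using b by (simp add: power_0_left)
      qed
      moreover have "f2 (last_term f2) < 0 \<or> \<not> (snd (last_term f2) > 0 \<and> even (snd (last_term f2)))"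
      proof (rule ccontr)
        assume "\<not> ?thesis"
        then have "f2 (last_term f2) \<ge> 0" "even (snd (last_term f2))" by auto
        then have "f2 (last_term f2) * y0 ^ snd (last_term f2) \<ge> 0" by (simp add: zero_le_even_power)
        then show False using b by simp
      qed
      ultimately show ?thesis using a by simp
    next
      case 3
      have a: "snd (first_term f2) = 0" and b: "f2 (first_term f2) * x0 ^ fst (first_term f2) < 0"
        using h2 Y2[of x0] 3 by (auto split: if_splits)
      have "snd (first_term f1) \<noteq> 0"
      proof
        assume "snd (first_term f1) = 0"
        then have "f1 (first_term f1) * x0 ^ fst (first_term f1) = 0" using h1 Y1[of x0] 3 by simp
        moreover have "f1 (first_term f1) \<noteq> 0" using nzv[of "first_term f1" f1] FT1 by simp
        ultimately show False using 3 by simp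
      qed
      moreover have "f2 (first_term f2) < 0 \<or> \<not> (fst (first_term f2) > 0 \<and> even (fst (first_term f2)))"
      proof (rule ccontr)
        assume "\<not> ?thesis"
        then have "f2 (first_term f2) \<ge> 0" "even (fst (first_term f2))" by auto
        then have "f2 (first_term f2) * x0 ^ fst (first_term f2) \<ge> 0" by (simp add: zero_le_even_power)
        then show False using b by simp
      qed
      ultimately show ?thesis using a by simp
    qed
  next
    assume "(xmin f1 > 0 \<and> xmin f2 = 0 \<and>
        (f2 (last_term f2) < 0 \<or> \<not> (snd (last_term f2) > 0 \<and> even (snd (last_term f2)))))
      \<or> (snd (first_term f1) > 0 \<and> snd (first_term f2) = 0 \<and>
        (f2 (first_term f2) < 0 \<or> \<not> (fst (first_term f2) > 0 \<and> even (fst (first_term f2)))))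
      \<or> (\<exists>u0\<in>Uset c A. \<exists>x y::real. x \<noteq> 0 \<and> y \<noteq> 0 \<and>
          inverse (x ^ snd A) * y ^ fst A = u0 \<and>
          x ^ fst (first_term f2) * y ^ snd (first_term f2) * charpoly f2 A u0 < 0)"
    then consider
      (a) "xmin f1 > 0" "xmin f2 = 0"
        "f2 (last_term f2) < 0 \<or> \<not> (snd (last_term f2) > 0 \<and> even (snd (last_term f2)))"
    | (b) "snd (first_term f1) > 0" "snd (first_term f2) = 0"
        "f2 (first_term f2) < 0 \<or> \<not> (fst (first_term f2) > 0 \<and> even (fst (first_term f2)))"
    | (c) u0 x y where "u0 \<in> Uset c A" "x \<noteq> 0" "y \<noteq> 0" "inverse (x ^ snd A) * y ^ fst A = u0"
          "x ^ fst (first_term f2) * y ^ snd (first_term f2) * charpoly f2 A u0 < 0"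
      by (elim disjE conjE bexE exE) blast+
    then show "C1 c A"
    proof cases
      case a
      define T where "T = last_term f2"
      have sT: "snd T > 0"
      proof (rule ccontr)
        assume "\<not> snd T > 0"
        then have "T = (0,0)" using LT2 a(2) T_def by (simp add: prod_eq_iff)
        then show False using LT2 nz2 T_def by simp
      qed
      define y0 :: real where "y0 = (if f2 T < 0 then 1 else -1)"
      have "f2 T * y0 ^ snd T < 0"
      proof (cases "f2 T < 0")
        case True then show ?thesis by (simp add: y0_def)
      next
        case False
        have "f2 T \<noteq> 0" using nzv[of T f2] LT2 T_def by simp
        with False have "f2 T > 0" by simp
        moreover have "odd (snd T)" using a(3) False sT T_def by auto
        ultimately show ?thesis using False by (simp add: y0_def)
      qed
      then have "peval f2 0 y0 < 0" using X2[of y0] a(2) T_def by simp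
      moreover have "peval f1 0 y0 = 0" using X1[of y0] a(1) by simp
      ultimately show ?thesis unfolding C1_def f1_def f2_def by blast
    next
      case b
      define T where "T = first_term f2"
      have sT: "fst T > 0"
      proof (rule ccontr)
        assume "\<not> fst T > 0"
        then have "T = (0,0)" using b(2) T_def by (simp add: prod_eq_iff)
        then show False using FT2 nz2 T_def by simp
      qed
      define x0 :: real where "x0 = (if f2 T < 0 then 1 else -1)"
      have "f2 T * x0 ^ fst T < 0"
      proof (cases "f2 T < 0")
        case True then show ?thesis by (simp add: x0_def)
      next
        case False
        have "f2 T \<noteq> 0" using nzv[of T f2] FT2 T_def by simp
        with False have "f2 T > 0" by simp
        moreover have "odd (fst T)" using b(3) False sT T_def by auto
        ultimately show ?thesis using False by (simp add: x0_def)
      qed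
      then have "peval f2 x0 0 < 0" using Y2[of x0] b(2) T_def by simp
      moreover have "peval f1 x0 0 = 0" using Y1[of x0] b(1) by simp
      ultimately show ?thesis unfolding C1_def f1_def f2_def by blast
    next
      case c
      have "charpoly f1 A u0 = 0" using c(1) unfolding Uset_def g1 by simp
      then have "peval f1 x y = 0" using P1[OF c(2), of y] c(4) by simp
      moreover have "peval f2 x y < 0" using P2[OF c(2), of y] c(4,5) by simp
      ultimately show ?thesis unfolding C1_def f1_def f2_def by blast
    qed
  qed
qed

end
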